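(* Let $k$ be a field. For $n\ge 3$ let $C_n$ be the cycle on $n$ vertices, and for $n\ge 1$ let $P_n$ be the path on $n$ vertices. Then $$\deg h_{R/I(C_n)}(t)=\left\lfloor \tfrac{n}{2}\right\rfloor \quad (n\ge 3),$$ and, for $n\ge 1$, $$\deg h_{R/I(P_n)}(t)=\begin{cases}\left\lceil \tfrac n2\right\rceil & \text{if } n\equiv 0,2 \pmod 3,\\ \left\lceil \tfrac n2\right\rceil-1 & \text{if } n\equiv 1\pmod 3.\end{cases}$$
   Context: For a finite simple graph $G$ with vertex set $\{x_1,\dots,x_n\}$, $R=k[x_1,\dots,x_n]$ and the edge ideal is $I(G)=(x_ix_j : \{x_i,x_j\}\in E(G))\subseteq R$. The Hilbert series $H_{R/I(G)}(t)=\sum_{i\ge0}\dim_k (R/I(G))_i\, t^i$ can be written as a reduced rational function $h_{R/I(G)}(t)/(1-t)^{\dim R/I(G)}$ with $h_{R/I(G)}(t)\in\mathbb Z[t]$, $h_{R/I(G)}(1)\neq 0$; $h_{R/I(G)}(t)$ is the $h$-polynomial of $R/I(G)$. *)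

theory Defs
  imports "HOL-Computational_Algebra.Polynomial" "HOL-Computational_Algebra.Formal_Power_Series"
    "HOL-Computational_Algebra.Polynomial_FPS"
begin

text \<open>A finite simple graph on the vertex set {0..<n} (vertex i stands for x_(i+1)),
  given by its set of edges, each edge a 2-element subset of {0..<n}.\<close>

definition cycle_edges :: "nat \<Rightarrow> nat set set" where
  "cycle_edges n = {{i, (i + 1) mod n} | i. i < n}"

definition path_edges :: "nat \<Rightarrow> nat set set" where
  "path_edges n = {{i, i + 1} | i. i + 1 < n}"

text \<open>Monomials of R = k[x_1..x_n] are exponent vectors a (zero outside {0..<n}).
  Since I(G) is a monomial ideal, the monomials not in I(G) (those not divisible by
  any x_i x_j with {i,j} an edge) form a k-basis of R/I(G); hence the Hilbert function
  dim_k (R/I(G))_d is the number of such monomials of degree d.\<close>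

definition standard_monomials :: "nat \<Rightarrow> nat set set \<Rightarrow> nat \<Rightarrow> (nat \<Rightarrow> nat) set" where
  "standard_monomials n E d =
     {a. (\<forall>i. n \<le> i \<longrightarrow> a i = 0) \<and> (\<Sum>i<n. a i) = d \<and>
         (\<forall>i j. {i, j} \<in> E \<longrightarrow> \<not> (0 < a i \<and> 0 < a j))}"

definition hilbert_fun :: "nat \<Rightarrow> nat set set \<Rightarrow> nat \<Rightarrow> nat" where
  "hilbert_fun n E d = card (standard_monomials n E d)"

definition hilbert_series :: "nat \<Rightarrow> nat set set \<Rightarrow> int fps" where
  "hilbert_series n E = Abs_fps (\<lambda>d. int (hilbert_fun n E d))"

text \<open>The reduced rational form H(t) = h(t)/(1-t)^D with h(1) \<noteq> 0;
  h is the h-polynomial (D is then dim R/I(G)).\<close>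

definition h_polynomial :: "nat \<Rightarrow> nat set set \<Rightarrow> int poly" where
  "h_polynomial n E = (THE h. poly h 1 \<noteq> 0 \<and>
      (\<exists>D::nat. hilbert_series n E * (1 - fps_X) ^ D = fps_of_poly h))"

end

theory Submission
  imports Defs
begin


lemma path_edges_cond:
  fixes a :: "nat \<Rightarrow> nat"
  shows   "(\<forall>i j. {i, j} \<in> path_edges n \<longrightarrow> \<not> (0 < a i \<and> 0 < a j)) \<longleftrightarrow>
   (\<forall>k. Suc k < n \<longrightarrow> a k = 0 \<or> a (Suc k) = 0)"
proof
  assume H: "\<forall>i j. {i, j} \<in> path_edges n \<longrightarrow> \<not> (0 < a i \<and> 0 < a j)"
  show "\<forall>k. Suc k < n \<longrightarrow> a k = 0 \<or> a (Suc k) = 0"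
  proof (intro allI impI)
    fix k assume "Suc k < n"
    then have "{k, Suc k} \<in> path_edges n" unfolding path_edges_def by auto
    then have "\<not> (0 < a k \<and> 0 < a (Suc k))" using H by blast
    then show "a k = 0 \<or> a (Suc k) = 0" by simp
  qed
next
  assume H: "\<forall>k. Suc k < n \<longrightarrow> a k = 0 \<or> a (Suc k) = 0"
  show "\<forall>i j. {i, j} \<in> path_edges n \<longrightarrow> \<not> (0 < a i \<and> 0 < a j)"
  proof (intro allI impI)
    fix i j assume "{i, j} \<in> path_edges n"
    then obtain k where k: "{i, j} = {k, k + 1}" "k + 1 < n" unfolding path_edges_def by auto
    then have "(i = k \<and> j = Suc k) \<or> (i = Suc k \<and> j = k)" by (auto simp: doubleton_eq_iff)
    then show "\<not> (0 < a i \<and> 0 < a j)" using H k(2) by auto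
  qed
qed

lemma cycle_edges_cond:
  fixes a :: "nat \<Rightarrow> nat"
  shows   "(\<forall>i j. {i, j} \<in> cycle_edges n \<longrightarrow> \<not> (0 < a i \<and> 0 < a j)) \<longleftrightarrow>
   (\<forall>k<n. a k = 0 \<or> a (Suc k mod n) = 0)"
proof
  assume H: "\<forall>i j. {i, j} \<in> cycle_edges n \<longrightarrow> \<not> (0 < a i \<and> 0 < a j)"
  show "\<forall>k<n. a k = 0 \<or> a (Suc k mod n) = 0"
  proof (intro allI impI)
    fix k assume "k < n"
    then have "{k, Suc k mod n} \<in> cycle_edges n" unfolding cycle_edges_def by auto
    then have "\<not> (0 < a k \<and> 0 < a (Suc k mod n))" using H by blast
    then show "a k = 0 \<or> a (Suc k mod n) = 0" by simp
  qed
next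
  assume H: "\<forall>k<n. a k = 0 \<or> a (Suc k mod n) = 0"
  show "\<forall>i j. {i, j} \<in> cycle_edges n \<longrightarrow> \<not> (0 < a i \<and> 0 < a j)"
  proof (intro allI impI)
    fix i j assume "{i, j} \<in> cycle_edges n"
    then obtain k where k: "{i, j} = {k, (k + 1) mod n}" "k < n" unfolding cycle_edges_def by auto
    then have "(i = k \<and> j = Suc k mod n) \<or> (i = Suc k mod n \<and> j = k)" by (auto simp: doubleton_eq_iff)
    then show "\<not> (0 < a i \<and> 0 < a j)" using H k(2) by auto
  qed
qed

lemma sm_path: "a \<in> standard_monomials n (path_edges n) d \<longleftrightarrow>
   (\<forall>i. n \<le> i \<longrightarrow> a i = 0) \<and> (\<Sum>i<n. a i) = d \<and> (\<forall>k. Suc k < n \<longrightarrow> a k = 0 \<or> a (Suc k) = 0)"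
  unfolding standard_monomials_def using path_edges_cond[of n a] by simp

lemma sm_cycle: "a \<in> standard_monomials n (cycle_edges n) d \<longleftrightarrow>
   (\<forall>i. n \<le> i \<longrightarrow> a i = 0) \<and> (\<Sum>i<n. a i) = d \<and> (\<forall>k<n. a k = 0 \<or> a (Suc k mod n) = 0)"
  unfolding standard_monomials_def using cycle_edges_cond[of n a] by simp

lemma sm_finite: "finite (standard_monomials n E d)"
proof -
  have "standard_monomials n E d \<subseteq> (\<lambda>f i. if i < n then f i else 0) ` (PiE {..<n} (\<lambda>_. {..d}))"
  proof
    fix a assume a: "a \<in> standard_monomials n E d"
    then have z: "\<forall>i. n \<le> i \<longrightarrow> a i = 0" and s: "(\<Sum>i<n. a i) = d"
      unfolding standard_monomials_def by auto
    have le: "a i \<le> d" if "i < n" for i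
      using member_le_sum[of i "{..<n}" a] that s by simp
    have "restrict a {..<n} \<in> PiE {..<n} (\<lambda>_. {..d})" using le by auto
    moreover have "a = (\<lambda>i. if i < n then restrict a {..<n} i else 0)"
      using z by (auto simp: fun_eq_iff)
    ultimately show "a \<in> (\<lambda>f i. if i < n then f i else 0) ` (PiE {..<n} (\<lambda>_. {..d}))" by blast
  qed
  moreover have "finite (PiE {..<n} (\<lambda>_. {..d::nat}))" by (intro finite_PiE) auto
  ultimately show ?thesis by (meson finite_imageI finite_subset)
qed

lemma sm_le: "a \<in> standard_monomials n E d \<Longrightarrow> a m \<le> d"
  unfolding standard_monomials_def
  using member_le_sum[of m "{..<n}" a] by (cases "m < n") auto

lemma card_split:
  assumes "finite S" "\<forall>a\<in>S. a m \<le> (d::nat)"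
  shows "card S = (\<Sum>j\<le>d. card {a\<in>S. a m = j})"
proof -
  have "S = (\<Union>j\<in>{..d}. {a\<in>S. a m = j})" using assms(2) by auto
  then have "card S = card (\<Union>j\<in>{..d}. {a\<in>S. a m = j})" by simp
  also have "\<dots> = (\<Sum>j\<le>d. card {a\<in>S. a m = j})"
    using assms(1) by (intro card_UN_disjoint) auto
  finally show ?thesis .
qed

lemma hf_path0: "hilbert_fun 0 E d = (if d = 0 then 1 else 0)"
proof -
  have "standard_monomials 0 E d = (if d = 0 then {\<lambda>_. 0} else {})"
    unfolding standard_monomials_def by (auto simp: fun_eq_iff)
  then show ?thesis unfolding hilbert_fun_def by simp
qed

lemma hf_path1: "hilbert_fun (Suc 0) (path_edges (Suc 0)) d = 1"
proof -
  have "standard_monomials (Suc 0) (path_edges (Suc 0)) d = {\<lambda>i. if i = 0 then d else 0}"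
  proof (rule set_eqI)
    fix a
    show "a \<in> standard_monomials (Suc 0) (path_edges (Suc 0)) d \<longleftrightarrow> a \<in> {\<lambda>i. if i = 0 then d else 0}"
      unfolding sm_path by (auto simp: fun_eq_iff)
  qed
  then show ?thesis unfolding hilbert_fun_def by simp
qed

lemma sum_SS: "(\<Sum>i<Suc (Suc n). f i) = (\<Sum>i<n. f i) + f n + (f (Suc n) :: nat)"
  by simp

lemma fiber0_path:
  "{a \<in> standard_monomials (Suc (Suc n)) (path_edges (Suc (Suc n))) d. a (Suc n) = 0} =
   standard_monomials (Suc n) (path_edges (Suc n)) d"
proof (intro equalityI subsetI)
  fix a assume "a \<in> {a \<in> standard_monomials (Suc (Suc n)) (path_edges (Suc (Suc n))) d. a (Suc n) = 0}"
  then have H: "a \<in> standard_monomials (Suc (Suc n)) (path_edges (Suc (Suc n))) d" and a0: "a (Suc n) = 0"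
    by simp_all
  from H have z: "\<forall>i\<ge>Suc (Suc n). a i = 0" and s: "sum a {..<Suc (Suc n)} = d"
      and p: "\<forall>k. Suc k < Suc (Suc n) \<longrightarrow> a k = 0 \<or> a (Suc k) = 0"
    unfolding sm_path by simp_all
  have z': "\<forall>i\<ge>Suc n. a i = 0"
  proof (intro allI impI)
    fix i assume "Suc n \<le> i"
    then have "i = Suc n \<or> Suc (Suc n) \<le> i" by linarith
    then show "a i = 0" using z a0 by auto
  qed
  have s': "sum a {..<Suc n} = d" using s a0 by simp
  have p': "\<forall>k. Suc k < Suc n \<longrightarrow> a k = 0 \<or> a (Suc k) = 0" using p by simp
  show "a \<in> standard_monomials (Suc n) (path_edges (Suc n)) d" unfolding sm_path using z' s' p' by simp
next
  fix a assume "a \<in> standard_monomials (Suc n) (path_edges (Suc n)) d"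
  then have z: "\<forall>i\<ge>Suc n. a i = 0" and s: "sum a {..<Suc n} = d"
    and p: "\<forall>k. Suc k < Suc n \<longrightarrow> a k = 0 \<or> a (Suc k) = 0"
    unfolding sm_path by simp_all
  have a0: "a (Suc n) = 0" using z by simp
  have z': "\<forall>i\<ge>Suc (Suc n). a i = 0" using z by simp
  have s': "sum a {..<Suc (Suc n)} = d" using s a0 by simp
  have p': "\<forall>k. Suc k < Suc (Suc n) \<longrightarrow> a k = 0 \<or> a (Suc k) = 0"
  proof (intro allI impI)
    fix k assume "Suc k < Suc (Suc n)"
    then have "Suc k < Suc n \<or> k = n" by linarith
    then show "a k = 0 \<or> a (Suc k) = 0" using p a0 by auto
  qed
  have "a \<in> standard_monomials (Suc (Suc n)) (path_edges (Suc (Suc n))) d"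
    unfolding sm_path using z' s' p' by simp
  then show "a \<in> {a \<in> standard_monomials (Suc (Suc n)) (path_edges (Suc (Suc n))) d. a (Suc n) = 0}"
    using a0 by simp
qed

lemma fiber_path:
  assumes j: "0 < j" "j \<le> d"
  shows "card {a \<in> standard_monomials (Suc (Suc n)) (path_edges (Suc (Suc n))) d. a (Suc n) = j} =
         hilbert_fun n (path_edges n) (d - j)"
proof -
  let ?A = "standard_monomials n (path_edges n) (d - j)"
  let ?B = "{a \<in> standard_monomials (Suc (Suc n)) (path_edges (Suc (Suc n))) d. a (Suc n) = j}"
  have "bij_betw (\<lambda>b. b(Suc n := j)) ?A ?B"
  proof (rule bij_betw_byWitness[where f' = "\<lambda>a. a(Suc n := 0)"])
    show "\<forall>b\<in>?A. (b(Suc n := j))(Suc n := 0) = b"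
    proof
      fix b assume "b \<in> ?A"
      then have "b (Suc n) = 0" unfolding sm_path by simp
      then show "(b(Suc n := j))(Suc n := 0) = b" by (simp add: fun_eq_iff)
    qed
    show "\<forall>a\<in>?B. (a(Suc n := 0))(Suc n := j) = a"
    proof
      fix a assume "a \<in> ?B"
      then have "a (Suc n) = j" by simp
      then show "(a(Suc n := 0))(Suc n := j) = a" by (simp add: fun_eq_iff)
    qed
    show "(\<lambda>b. b(Suc n := j)) ` ?A \<subseteq> ?B"
    proof (rule image_subsetI)
      fix b assume b: "b \<in> ?A"
      then have z: "\<forall>i\<ge>n. b i = 0" and s: "(\<Sum>i<n. b i) = d - j"
        and p: "\<forall>k. Suc k < n \<longrightarrow> b k = 0 \<or> b (Suc k) = 0" unfolding sm_path by simp_all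
      have bn: "b n = 0" using z by simp
      have "(\<Sum>i<Suc (Suc n). (b(Suc n := j)) i) = (\<Sum>i<n. b i) + b n + j"
        unfolding sum_SS by simp
      also have "\<dots> = d" using s bn j by simp
      finally have s': "(\<Sum>i<Suc (Suc n). (b(Suc n := j)) i) = d" .
      have p': "\<forall>k. Suc k < Suc (Suc n) \<longrightarrow> (b(Suc n := j)) k = 0 \<or> (b(Suc n := j)) (Suc k) = 0"
      proof (intro allI impI)
        fix k assume k: "Suc k < Suc (Suc n)"
        show "(b(Suc n := j)) k = 0 \<or> (b(Suc n := j)) (Suc k) = 0"
        proof (cases "Suc k < n")
          case True then show ?thesis using p by simp
        next
          case False
          then have "k = n \<or> Suc k = n" using k by linarith
          then show ?thesis using bn by auto
        qed
      qed
      have z': "\<forall>i\<ge>Suc (Suc n). (b(Suc n := j)) i = 0" using z by simp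
      have "b(Suc n := j) \<in> standard_monomials (Suc (Suc n)) (path_edges (Suc (Suc n))) d"
        unfolding sm_path using z' s' p' by simp
      then show "b(Suc n := j) \<in> ?B" by simp
    qed
    show "(\<lambda>a. a(Suc n := 0)) ` ?B \<subseteq> ?A"
    proof (rule image_subsetI)
      fix a assume "a \<in> ?B"
      then have a: "a \<in> standard_monomials (Suc (Suc n)) (path_edges (Suc (Suc n))) d" and aj: "a (Suc n) = j"
        by simp_all
      then have z: "\<forall>i\<ge>Suc (Suc n). a i = 0" and s: "(\<Sum>i<Suc (Suc n). a i) = d"
        and p: "\<forall>k. Suc k < Suc (Suc n) \<longrightarrow> a k = 0 \<or> a (Suc k) = 0" unfolding sm_path by simp_all
      have "a n = 0 \<or> a (Suc n) = 0" using p by simp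
      then have an: "a n = 0" using aj j by simp
      have s': "(\<Sum>i<n. (a(Suc n := 0)) i) = d - j"
        using s an aj unfolding sum_SS by simp
      have z': "\<forall>i\<ge>n. (a(Suc n := 0)) i = 0"
      proof (intro allI impI)
        fix i assume "n \<le> i"
        then have "i = n \<or> i = Suc n \<or> Suc (Suc n) \<le> i" by linarith
        then show "(a(Suc n := 0)) i = 0" using an z by auto
      qed
      have p': "\<forall>k. Suc k < n \<longrightarrow> (a(Suc n := 0)) k = 0 \<or> (a(Suc n := 0)) (Suc k) = 0"
        using p by simp
      show "a(Suc n := 0) \<in> ?A" unfolding sm_path using z' s' p' by simp
    qed
  qed
  then show ?thesis unfolding hilbert_fun_def by (simp add: bij_betw_same_card)
qed

lemma hf_path_rec: "hilbert_fun (Suc (Suc n)) (path_edges (Suc (Suc n))) d =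
   hilbert_fun (Suc n) (path_edges (Suc n)) d + (\<Sum>e<d. hilbert_fun n (path_edges n) e)"
proof -
  let ?S = "standard_monomials (Suc (Suc n)) (path_edges (Suc (Suc n))) d"
  have "hilbert_fun (Suc (Suc n)) (path_edges (Suc (Suc n))) d = (\<Sum>j\<le>d. card {a\<in>?S. a (Suc n) = j})"
    unfolding hilbert_fun_def by (rule card_split) (auto simp: sm_finite sm_le)
  also have "\<dots> = card {a\<in>?S. a (Suc n) = 0} + (\<Sum>j<d. card {a\<in>?S. a (Suc n) = Suc j})"
    by (rule sum.atMost_shift)
  also have "(\<Sum>j<d. card {a\<in>?S. a (Suc n) = Suc j}) = (\<Sum>j<d. hilbert_fun n (path_edges n) (d - Suc j))"
    by (rule sum.cong) (auto intro: fiber_path)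
  also have "\<dots> = (\<Sum>e<d. hilbert_fun n (path_edges n) e)"
    by (rule sum.nat_diff_reindex)
  finally show ?thesis unfolding fiber0_path hilbert_fun_def .
qed

lemma cyc_cond_split:
  fixes a :: "nat \<Rightarrow> nat"
  shows "(\<forall>k<Suc m. a k = 0 \<or> a (Suc k mod Suc m) = 0) \<longleftrightarrow>
         (\<forall>k. Suc k < Suc m \<longrightarrow> a k = 0 \<or> a (Suc k) = 0) \<and> (a m = 0 \<or> a 0 = 0)"
proof
  assume H: "\<forall>k<Suc m. a k = 0 \<or> a (Suc k mod Suc m) = 0"
  have "\<forall>k. Suc k < Suc m \<longrightarrow> a k = 0 \<or> a (Suc k) = 0"
  proof (intro allI impI)
    fix k assume k: "Suc k < Suc m"
    then have m: "Suc k mod Suc m = Suc k" by simp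
    have kk: "k < Suc m" using k by simp
    have "a k = 0 \<or> a (Suc k mod Suc m) = 0" using H[rule_format, OF kk] .
    then show "a k = 0 \<or> a (Suc k) = 0" using m by simp
  qed
  moreover have "a m = 0 \<or> a (Suc m mod Suc m) = 0" using H[rule_format, of m] by simp
  then have "a m = 0 \<or> a 0 = 0" by simp
  ultimately show "(\<forall>k. Suc k < Suc m \<longrightarrow> a k = 0 \<or> a (Suc k) = 0) \<and> (a m = 0 \<or> a 0 = 0)" by simp
next
  assume H: "(\<forall>k. Suc k < Suc m \<longrightarrow> a k = 0 \<or> a (Suc k) = 0) \<and> (a m = 0 \<or> a 0 = 0)"
  show "\<forall>k<Suc m. a k = 0 \<or> a (Suc k mod Suc m) = 0"
  proof (intro allI impI)
    fix k assume k: "k < Suc m"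
    show "a k = 0 \<or> a (Suc k mod Suc m) = 0"
    proof (cases "k = m")
      case True then show ?thesis using H by simp
    next
      case False
      then have "Suc k < Suc m" using k by simp
      then show ?thesis using H by simp
    qed
  qed
qed

lemma sm_cyc3:
  "a \<in> standard_monomials (Suc (Suc (Suc n))) (cycle_edges (Suc (Suc (Suc n)))) d \<longleftrightarrow>
   (\<forall>i\<ge>Suc (Suc (Suc n)). a i = 0) \<and> sum a {..<Suc (Suc (Suc n))} = d \<and>
   (\<forall>k. Suc k < Suc (Suc (Suc n)) \<longrightarrow> a k = 0 \<or> a (Suc k) = 0) \<and> (a (Suc (Suc n)) = 0 \<or> a 0 = 0)"
  unfolding sm_cycle cyc_cond_split by simp

lemma sum_SSS: "(\<Sum>i<Suc (Suc (Suc n)). f i) = f 0 + (\<Sum>i<n. f (Suc i)) + f (Suc n) + (f (Suc (Suc n)) :: nat)"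
  by (subst sum.lessThan_Suc_shift) simp

lemma fiber0_cyc:
  "{a \<in> standard_monomials (Suc (Suc (Suc n))) (cycle_edges (Suc (Suc (Suc n)))) d. a (Suc (Suc n)) = 0} =
   standard_monomials (Suc (Suc n)) (path_edges (Suc (Suc n))) d"
proof (intro equalityI subsetI)
  fix a assume "a \<in> {a \<in> standard_monomials (Suc (Suc (Suc n))) (cycle_edges (Suc (Suc (Suc n)))) d. a (Suc (Suc n)) = 0}"
  then have H: "a \<in> standard_monomials (Suc (Suc (Suc n))) (cycle_edges (Suc (Suc (Suc n)))) d" and a0: "a (Suc (Suc n)) = 0"
    by simp_all
  from H have z: "\<forall>i\<ge>Suc (Suc (Suc n)). a i = 0" and s: "sum a {..<Suc (Suc (Suc n))} = d"
      and p: "\<forall>k. Suc k < Suc (Suc (Suc n)) \<longrightarrow> a k = 0 \<or> a (Suc k) = 0"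
    unfolding sm_cyc3 by simp_all
  have z': "\<forall>i\<ge>Suc (Suc n). a i = 0"
  proof (intro allI impI)
    fix i assume "Suc (Suc n) \<le> i"
    then have "i = Suc (Suc n) \<or> Suc (Suc (Suc n)) \<le> i" by linarith
    then show "a i = 0" using z a0 by auto
  qed
  have s': "sum a {..<Suc (Suc n)} = d" using s a0 by simp
  have p': "\<forall>k. Suc k < Suc (Suc n) \<longrightarrow> a k = 0 \<or> a (Suc k) = 0" using p by simp
  show "a \<in> standard_monomials (Suc (Suc n)) (path_edges (Suc (Suc n))) d" unfolding sm_path using z' s' p' by simp
next
  fix a assume "a \<in> standard_monomials (Suc (Suc n)) (path_edges (Suc (Suc n))) d"
  then have z: "\<forall>i\<ge>Suc (Suc n). a i = 0" and s: "sum a {..<Suc (Suc n)} = d"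
    and p: "\<forall>k. Suc k < Suc (Suc n) \<longrightarrow> a k = 0 \<or> a (Suc k) = 0"
    unfolding sm_path by simp_all
  have a0: "a (Suc (Suc n)) = 0" using z by simp
  have z': "\<forall>i\<ge>Suc (Suc (Suc n)). a i = 0" using z by simp
  have s': "sum a {..<Suc (Suc (Suc n))} = d" using s a0 by simp
  have p': "\<forall>k. Suc k < Suc (Suc (Suc n)) \<longrightarrow> a k = 0 \<or> a (Suc k) = 0"
  proof (intro allI impI)
    fix k assume "Suc k < Suc (Suc (Suc n))"
    then have "Suc k < Suc (Suc n) \<or> k = Suc n" by linarith
    then show "a k = 0 \<or> a (Suc k) = 0" using p a0 by auto
  qed
  have "a \<in> standard_monomials (Suc (Suc (Suc n))) (cycle_edges (Suc (Suc (Suc n)))) d"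
    unfolding sm_cyc3 using z' s' p' a0 by simp
  then show "a \<in> {a \<in> standard_monomials (Suc (Suc (Suc n))) (cycle_edges (Suc (Suc (Suc n)))) d. a (Suc (Suc n)) = 0}"
    using a0 by simp
qed

lemma fiber_cyc:
  assumes j: "0 < j" "j \<le> d"
  shows "card {a \<in> standard_monomials (Suc (Suc (Suc n))) (cycle_edges (Suc (Suc (Suc n)))) d. a (Suc (Suc n)) = j} =
         hilbert_fun n (path_edges n) (d - j)"
proof -
  let ?A = "standard_monomials n (path_edges n) (d - j)"
  let ?B = "{a \<in> standard_monomials (Suc (Suc (Suc n))) (cycle_edges (Suc (Suc (Suc n)))) d. a (Suc (Suc n)) = j}"
  let ?f = "\<lambda>b i. if i = Suc (Suc n) then j else if i = 0 then 0 else b (i - 1)"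
  let ?g = "\<lambda>a i. if i < n then a (Suc i) else (0::nat)"
  have "bij_betw ?f ?A ?B"
  proof (rule bij_betw_byWitness[where f' = ?g])
    show "\<forall>b\<in>?A. ?g (?f b) = b"
    proof
      fix b assume "b \<in> ?A"
      then have z: "\<forall>i\<ge>n. b i = 0" unfolding sm_path by simp
      show "?g (?f b) = b"
      proof
        fix i show "?g (?f b) i = b i" using z by auto
      qed
    qed
    show "\<forall>a\<in>?B. ?f (?g a) = a"
    proof
      fix a assume "a \<in> ?B"
      then have H: "a \<in> standard_monomials (Suc (Suc (Suc n))) (cycle_edges (Suc (Suc (Suc n)))) d"
        and aj: "a (Suc (Suc n)) = j" by simp_all
      from H have z: "\<forall>i\<ge>Suc (Suc (Suc n)). a i = 0"
        and p: "\<forall>k. Suc k < Suc (Suc (Suc n)) \<longrightarrow> a k = 0 \<or> a (Suc k) = 0"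
        and e: "a (Suc (Suc n)) = 0 \<or> a 0 = 0"
        unfolding sm_cyc3 by simp_all
      have a0: "a 0 = 0" using e aj j by simp
      have "a (Suc n) = 0 \<or> a (Suc (Suc n)) = 0" using p by simp
      then have an: "a (Suc n) = 0" using aj j by simp
      show "?f (?g a) = a"
      proof
        fix i
        show "?f (?g a) i = a i"
        proof (cases "i = Suc (Suc n)")
          case True then show ?thesis using aj by simp
        next
          case False
          show ?thesis
          proof (cases i)
            case 0 then show ?thesis using a0 by simp
          next
            case (Suc i')
            then have "i' < n \<or> i' = n \<or> Suc (Suc (Suc n)) \<le> i" using False by linarith
            then show ?thesis using Suc False an z by auto
          qed
        qed
      qed
    qed
    show "?f ` ?A \<subseteq> ?B"
    proof (rule image_subsetI)
      fix b assume b: "b \<in> ?A"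
      then have z: "\<forall>i\<ge>n. b i = 0" and s: "(\<Sum>i<n. b i) = d - j"
        and p: "\<forall>k. Suc k < n \<longrightarrow> b k = 0 \<or> b (Suc k) = 0" unfolding sm_path by simp_all
      have bn: "b n = 0" using z by simp
      have "(\<Sum>i<Suc (Suc (Suc n)). ?f b i) = 0 + (\<Sum>i<n. b i) + b n + j"
        unfolding sum_SSS by simp
      also have "\<dots> = d" using s bn j by simp
      finally have s': "(\<Sum>i<Suc (Suc (Suc n)). ?f b i) = d" .
      have p': "\<forall>k. Suc k < Suc (Suc (Suc n)) \<longrightarrow> ?f b k = 0 \<or> ?f b (Suc k) = 0"
      proof (intro allI impI)
        fix k assume k: "Suc k < Suc (Suc (Suc n))"
        show "?f b k = 0 \<or> ?f b (Suc k) = 0"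
        proof (cases k)
          case 0 then show ?thesis by simp
        next
          case (Suc k')
          then have "Suc k' < n \<or> Suc k' = n \<or> k' = n" using k by linarith
          then show ?thesis using Suc p bn by auto
        qed
      qed
      have z': "\<forall>i\<ge>Suc (Suc (Suc n)). ?f b i = 0" using z by auto
      have "?f b \<in> standard_monomials (Suc (Suc (Suc n))) (cycle_edges (Suc (Suc (Suc n)))) d"
        unfolding sm_cyc3 using z' s' p' by simp
      then show "?f b \<in> ?B" by simp
    qed
    show "?g ` ?B \<subseteq> ?A"
    proof (rule image_subsetI)
      fix a assume "a \<in> ?B"
      then have H: "a \<in> standard_monomials (Suc (Suc (Suc n))) (cycle_edges (Suc (Suc (Suc n)))) d"
        and aj: "a (Suc (Suc n)) = j" by simp_all
      from H have z: "\<forall>i\<ge>Suc (Suc (Suc n)). a i = 0" and s: "sum a {..<Suc (Suc (Suc n))} = d"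
        and p: "\<forall>k. Suc k < Suc (Suc (Suc n)) \<longrightarrow> a k = 0 \<or> a (Suc k) = 0"
        and e: "a (Suc (Suc n)) = 0 \<or> a 0 = 0"
        unfolding sm_cyc3 by simp_all
      have a0: "a 0 = 0" using e aj j by simp
      have "a (Suc n) = 0 \<or> a (Suc (Suc n)) = 0" using p by simp
      then have an: "a (Suc n) = 0" using aj j by simp
      have s': "(\<Sum>i<n. ?g a i) = d - j"
        using s a0 an aj unfolding sum_SSS by simp
      have z': "\<forall>i\<ge>n. ?g a i = 0" by simp
      have p': "\<forall>k. Suc k < n \<longrightarrow> ?g a k = 0 \<or> ?g a (Suc k) = 0"
        using p by simp
      show "?g a \<in> ?A" unfolding sm_path using z' s' p' by simp
    qed
  qed
  then show ?thesis unfolding hilbert_fun_def by (simp add: bij_betw_same_card)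
qed

lemma hf_cyc_rec': "hilbert_fun (Suc (Suc (Suc n))) (cycle_edges (Suc (Suc (Suc n)))) d =
   hilbert_fun (Suc (Suc n)) (path_edges (Suc (Suc n))) d + (\<Sum>e<d. hilbert_fun n (path_edges n) e)"
proof -
  let ?S = "standard_monomials (Suc (Suc (Suc n))) (cycle_edges (Suc (Suc (Suc n)))) d"
  have "hilbert_fun (Suc (Suc (Suc n))) (cycle_edges (Suc (Suc (Suc n)))) d = (\<Sum>j\<le>d. card {a\<in>?S. a (Suc (Suc n)) = j})"
    unfolding hilbert_fun_def by (rule card_split) (auto simp: sm_finite sm_le)
  also have "\<dots> = card {a\<in>?S. a (Suc (Suc n)) = 0} + (\<Sum>j<d. card {a\<in>?S. a (Suc (Suc n)) = Suc j})"
    by (rule sum.atMost_shift)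
  also have "(\<Sum>j<d. card {a\<in>?S. a (Suc (Suc n)) = Suc j}) = (\<Sum>j<d. hilbert_fun n (path_edges n) (d - Suc j))"
    by (rule sum.cong) (auto intro: fiber_cyc)
  also have "\<dots> = (\<Sum>e<d. hilbert_fun n (path_edges n) e)"
    by (rule sum.nat_diff_reindex)
  finally show ?thesis unfolding fiber0_cyc hilbert_fun_def .
qed

lemma hf_cyc_rec: "hilbert_fun (n + 3) (cycle_edges (n + 3)) d =
   hilbert_fun (n + 2) (path_edges (n + 2)) d + (\<Sum>e<d. hilbert_fun n (path_edges n) e)"
  using hf_cyc_rec'[of n d] by (simp add: numeral_3_eq_3 numeral_2_eq_2)



fun gp :: "nat \<Rightarrow> int poly" where
  "gp 0 = 1" | "gp (Suc 0) = 1" |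
  "gp (Suc (Suc n)) = (if even n then gp (Suc n) + pCons 0 (gp n)
      else gp (Suc n) - pCons 0 (gp (Suc n)) + pCons 0 (gp n))"

fun cc :: "nat \<Rightarrow> int" where
  "cc 0 = 1" | "cc (Suc 0) = 0" |
  "cc (Suc (Suc n)) = (if even n then cc (Suc n) + cc n else cc n - cc (Suc n))"

fun dd :: "nat \<Rightarrow> int" where
  "dd 0 = 0" | "dd (Suc 0) = 1" |
  "dd (Suc (Suc n)) = (if even n then dd (Suc n) + dd n else cc (Suc n) - dd (Suc n) + dd n)"

definition Dn :: "nat \<Rightarrow> nat" where "Dn n = (n + 1) div 2"

lemma degree_pCons0_le: "degree (pCons 0 p) \<le> Suc (degree p)"
  by (cases "p = 0") auto

lemma gp_coeffs: "degree (gp n) \<le> Dn n \<and> coeff (gp n) (Dn n) = cc n \<and> coeff (pCons 0 (gp n)) (Dn n) = dd n"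
proof (induction n rule: gp.induct)
  case 1 then show ?case by (simp add: Dn_def)
next
  case 2 then show ?case by (simp add: Dn_def)
next
  case (3 n)
  show ?case
  proof (cases "even n")
    case True
    have D1: "Dn (Suc n) = Suc (Dn n)" "Dn (Suc (Suc n)) = Suc (Dn n)" using True
      by (auto simp: Dn_def elim!: evenE)
    note ih = 3(1)[OF True] 3(2)[OF True]
    have e: "gp (Suc (Suc n)) = gp (Suc n) + pCons 0 (gp n)" using True by simp
    have deg: "degree (gp (Suc (Suc n))) \<le> Dn (Suc (Suc n))"
      unfolding e using ih D1 degree_pCons0_le[of "gp n"]
      by (intro degree_add_le) auto
    have "coeff (pCons 0 (gp (Suc n))) (Dn (Suc n)) = coeff (gp (Suc n)) (Dn n)"
      using D1 by simp
    then show ?thesis using ih D1 deg True unfolding e by (simp add: e)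
  next
    case False
    have D1: "Dn (Suc n) = Dn n" "Dn (Suc (Suc n)) = Suc (Dn n)" using False
      by (auto simp: Dn_def elim!: oddE)
    note ih = 3(3)[OF False] 3(5)[OF False]
    have e: "gp (Suc (Suc n)) = gp (Suc n) - pCons 0 (gp (Suc n)) + pCons 0 (gp n)" using False by simp
    have deg: "degree (gp (Suc (Suc n))) \<le> Dn (Suc (Suc n))"
    proof -
      have a: "degree (gp (Suc n)) \<le> Dn n" "degree (gp n) \<le> Dn n" using ih D1 by auto
      have "degree (gp (Suc n) - pCons 0 (gp (Suc n))) \<le> Suc (Dn n)"
        using a degree_pCons0_le[of "gp (Suc n)"] by (intro degree_diff_le) auto
      moreover have "degree (pCons 0 (gp n)) \<le> Suc (Dn n)"
        using a degree_pCons0_le[of "gp n"] by auto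
      ultimately show ?thesis unfolding e D1 by (intro degree_add_le)
    qed
    have z: "coeff (gp (Suc n)) (Suc (Dn n)) = 0"
      using ih D1 by (intro coeff_eq_0) auto
    show ?thesis using ih D1 deg False z unfolding e by simp
  qed
qed

lemma gp_pos: "poly (gp n) 1 > 0"
  by (induction n rule: gp.induct) auto



definition Ct :: "int list" where "Ct = [1,0,1,-1,0,-1,-1,0,-1,1,0,1]"
definition At :: "int list" where "At = [0,1,1,1,2,-1,1,-3,-2,-2,-4,2]"
definition Bt :: "int list" where "Bt = [-2,4,2,2,4,-2,2,-4,-2,-2,-4,2]"

lemma cd_closed: "cc n = Ct ! (n mod 12) \<and> dd n = At ! (n mod 12) + Bt ! (n mod 12) * int (n div 12)"
proof (induction n rule: cc.induct)
  case 1 then show ?case by (simp add: Ct_def At_def Bt_def)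
next
  case 2 then show ?case by (simp add: Ct_def At_def Bt_def)
next
  case (3 n)
  have ih: "cc (Suc n) = Ct ! (Suc n mod 12) \<and> dd (Suc n) = At ! (Suc n mod 12) + Bt ! (Suc n mod 12) * int (Suc n div 12)"
     "cc n = Ct ! (n mod 12) \<and> dd n = At ! (n mod 12) + Bt ! (n mod 12) * int (n div 12)"
    using 3 by (cases "even n"; simp)+
  obtain q r where n: "n = 12 * q + r" and r: "r < 12"
    by (metis div_mod_decomp mod_less_divisor zero_less_numeral mult.commute)
  have f: "n mod 12 = r" "n div 12 = q" "Suc n mod 12 = Suc r mod 12" "Suc n div 12 = q + Suc r div 12"
    "Suc (Suc n) mod 12 = Suc (Suc r) mod 12" "Suc (Suc n) div 12 = q + Suc (Suc r) div 12"
    "even n = even r"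
  proof -
    have h: "(12 * q + s) mod 12 = s mod 12" "(12 * q + s) div 12 = q + s div 12" for s :: nat
      by simp_all
    have "Suc n = 12 * q + Suc r" "Suc (Suc n) = 12 * q + Suc (Suc r)" by (simp_all add: n)
    then show "n mod 12 = r" "n div 12 = q" "Suc n mod 12 = Suc r mod 12" "Suc n div 12 = q + Suc r div 12"
    "Suc (Suc n) mod 12 = Suc (Suc r) mod 12" "Suc (Suc n) div 12 = q + Suc (Suc r) div 12"
    "even n = even r" using h[of r] h[of "Suc r"] h[of "Suc (Suc r)"] r unfolding n by (simp_all only:) simp_all
  qed
  have eqs: "cc (Suc (Suc n)) = (if even n then cc (Suc n) + cc n else cc n - cc (Suc n))"
    "dd (Suc (Suc n)) = (if even n then dd (Suc n) + dd n else cc (Suc n) - dd (Suc n) + dd n)"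
    by simp_all
  have "r = 0 \<or> r = 1 \<or> r = 2 \<or> r = 3 \<or> r = 4 \<or> r = 5 \<or> r = 6 \<or> r = 7 \<or> r = 8 \<or> r = 9 \<or> r = 10 \<or> r = 11"
    using r by presburger
  then show ?case unfolding eqs f using ih unfolding f
    by (elim disjE) (simp_all add: Ct_def At_def Bt_def algebra_simps)
qed




lemma fps_rec:
  fixes f g k :: "nat \<Rightarrow> int"
  assumes "\<And>d. f d = g d + (\<Sum>e<d. k e)"
  shows "(1 - fps_X) * Abs_fps f = (1 - fps_X) * Abs_fps g + fps_X * Abs_fps k"
proof (rule fps_ext)
  fix d
  have e: "(1 - fps_X) * F = F - fps_X * F" for F :: "int fps" by (simp add: algebra_simps)
  show "fps_nth ((1 - fps_X) * Abs_fps f) d = fps_nth ((1 - fps_X) * Abs_fps g + fps_X * Abs_fps k) d"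
    unfolding e using assms by (cases d) (auto simp: algebra_simps)
qed

abbreviation HP where "HP n \<equiv> hilbert_series n (path_edges n)"

lemma fps_1mX: "fps_of_poly [:1, -1:] = (1 - fps_X :: int fps)"
  by (simp add: fps_of_poly_pCons fps_of_poly_const fps_const_neg)

lemma HP_rec: "(1 - fps_X) * HP (Suc (Suc n)) = (1 - fps_X) * HP (Suc n) + fps_X * HP n"
  unfolding hilbert_series_def by (rule fps_rec) (simp add: hf_path_rec)

lemma HP0: "HP 0 = 1"
  unfolding hilbert_series_def by (rule fps_ext) (simp add: hf_path0)

lemma HP1: "HP 1 * (1 - fps_X) = 1"
proof -
  have "HP 1 = Abs_fps (\<lambda>_. 1)" unfolding hilbert_series_def by (simp add: hf_path1)
  moreover have "Abs_fps (\<lambda>_. 1 :: int) * (1 - fps_X) = 1"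
  proof (rule fps_ext)
    fix d
    have e: "F * (1 - fps_X) = F - fps_X * F" for F :: "int fps" by (simp add: algebra_simps)
    show "fps_nth (Abs_fps (\<lambda>_. 1 :: int) * (1 - fps_X)) d = fps_nth 1 d"
      unfolding e by (cases d) auto
  qed
  ultimately show ?thesis by simp
qed

lemma HP_gp: "HP n * (1 - fps_X) ^ Dn n = fps_of_poly (gp n)"
proof (induction n rule: gp.induct)
  case 1 then show ?case by (simp add: HP0 Dn_def)
next
  case 2 then show ?case using HP1 by (simp add: Dn_def)
next
  case (3 n)
  have key: "HP (Suc (Suc n)) * (1 - fps_X) ^ Suc (Dn n) =
     HP (Suc n) * (1 - fps_X) ^ Suc (Dn n) + fps_X * (HP n * (1 - fps_X) ^ Dn n)"
  proof -
    have "HP (Suc (Suc n)) * (1 - fps_X) ^ Suc (Dn n) = ((1 - fps_X) * HP (Suc (Suc n))) * (1 - fps_X) ^ Dn n"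
      by (simp add: algebra_simps)
    also have "\<dots> = ((1 - fps_X) * HP (Suc n) + fps_X * HP n) * (1 - fps_X) ^ Dn n"
      by (simp add: HP_rec)
    finally show ?thesis by (simp add: algebra_simps)
  qed
  show ?case
  proof (cases "even n")
    case True
    note ih = 3(1)[OF True] 3(2)[OF True]
    have D1: "Dn (Suc n) = Suc (Dn n)" "Dn (Suc (Suc n)) = Suc (Dn n)" using True
      by (auto simp: Dn_def elim!: evenE)
    show ?thesis using True key ih D1
      by (simp add: fps_of_poly_add fps_of_poly_pCons mult.commute)
  next
    case False
    note ih = 3(3)[OF False] 3(5)[OF False]
    have D1: "Dn (Suc n) = Dn n" "Dn (Suc (Suc n)) = Suc (Dn n)" using False
      by (auto simp: Dn_def elim!: oddE)
    have "HP (Suc n) * (1 - fps_X) ^ Suc (Dn n) = (1 - fps_X) * fps_of_poly (gp (Suc n))"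
      using ih D1 by (simp add: algebra_simps)
    then show ?thesis using False key ih D1
      by (simp add: fps_of_poly_add fps_of_poly_diff fps_of_poly_pCons algebra_simps)
  qed
qed

lemma h_unique_aux:
  assumes "H * (1 - fps_X) ^ D = fps_of_poly (h :: int poly)" "H * (1 - fps_X) ^ D' = fps_of_poly h'"
    "D \<le> D'" "poly h' 1 \<noteq> 0"
  shows "h' = h"
proof -
  obtain k where k: "D' = D + k" using assms(3) le_Suc_ex by blast
  have "fps_of_poly (h * [:1, -1:] ^ k) = fps_of_poly h * (1 - fps_X) ^ k"
    by (simp add: fps_of_poly_mult fps_of_poly_power fps_1mX)
  also have "\<dots> = H * (1 - fps_X) ^ D'" unfolding k using assms(1)
    by (simp add: power_add mult.assoc)
  finally have "fps_of_poly h' = fps_of_poly (h * [:1, -1:] ^ k)" using assms(2) by simp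
  then have e: "h' = h * [:1, -1:] ^ k" by (simp add: fps_of_poly_eq_iff)
  then have "k = 0" using assms(4) by (cases k) auto
  then show ?thesis using e by simp
qed

lemma h_unique:
  assumes "poly h 1 \<noteq> 0" "hilbert_series n E * (1 - fps_X) ^ D = fps_of_poly h"
  shows "h_polynomial n E = h"
  unfolding h_polynomial_def
proof (rule the_equality)
  show "poly h 1 \<noteq> 0 \<and> (\<exists>D. hilbert_series n E * (1 - fps_X) ^ D = fps_of_poly h)" using assms by blast
next
  fix h' assume "poly h' 1 \<noteq> 0 \<and> (\<exists>D. hilbert_series n E * (1 - fps_X) ^ D = fps_of_poly h')"
  then obtain D' where h': "poly h' 1 \<noteq> 0" "hilbert_series n E * (1 - fps_X) ^ D' = fps_of_poly h'" by blast
  show "h' = h"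
  proof (cases "D \<le> D'")
    case True then show ?thesis by (rule h_unique_aux[OF assms(2) h'(2) _ h'(1)])
  next
    case False then show ?thesis using h_unique_aux[OF h'(2) assms(2) _ assms(1)] by simp
  qed
qed



lemma ceil_half: "nat \<lceil>real n / 2\<rceil> = (n + 1) div 2"
proof -
  have "\<lceil>real n / 2\<rceil> = int ((n + 1) div 2)"
  proof (rule ceiling_unique)
    show "real_of_int (int ((n + 1) div 2)) - 1 < real n / 2"
      by (cases "even n") (auto elim!: evenE oddE simp: field_simps)
    show "real n / 2 \<le> real_of_int (int ((n + 1) div 2))"
      by (cases "even n") (auto elim!: evenE oddE simp: field_simps)
  qed
  then show ?thesis by simp
qed

lemma mod12_cases:
  fixes n :: nat
  obtains "n mod 12 = 0" | "n mod 12 = 1" | "n mod 12 = 2" | "n mod 12 = 3" | "n mod 12 = 4"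
    | "n mod 12 = 5" | "n mod 12 = 6" | "n mod 12 = 7" | "n mod 12 = 8" | "n mod 12 = 9"
    | "n mod 12 = 10" | "n mod 12 = 11"
proof -
  have "n mod 12 < 12" by simp
  then have "n mod 12 = 0 \<or> n mod 12 = 1 \<or> n mod 12 = 2 \<or> n mod 12 = 3 \<or> n mod 12 = 4 \<or> n mod 12 = 5 \<or> n mod 12 = 6 \<or> n mod 12 = 7 \<or> n mod 12 = 8 \<or> n mod 12 = 9 \<or> n mod 12 = 10 \<or> n mod 12 = 11"
    by presburger
  then show ?thesis by (elim disjE) (simp_all add: that)
qed

lemma mod3_of_mod12: "(n::nat) mod 3 = (n mod 12) mod 3"
  by (simp add: mod_mod_cancel)

lemma cc_zero: "cc n = 0 \<longleftrightarrow> n mod 3 = 1"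
  using cd_closed[of n] mod3_of_mod12[of n]
  by (cases n rule: mod12_cases) (simp_all add: Ct_def)

lemma dd_nz: "n mod 3 = 1 \<Longrightarrow> dd n \<noteq> 0"
  using cd_closed[of n] mod3_of_mod12[of n]
  by (cases n rule: mod12_cases) (simp_all add: At_def Bt_def; linarith)+

lemma cyc_nz: "cc (Suc (Suc m)) + cc m \<noteq> 0"
proof -
  have e: "Suc (Suc m) mod 12 = (m mod 12 + 2) mod 12" by presburger
  show ?thesis using cd_closed[of m] cd_closed[of "Suc (Suc m)"] e
    by (cases m rule: mod12_cases) (simp_all add: Ct_def)
qed

lemma path_deg: assumes "1 \<le> n"
  shows "degree (gp n) = (if n mod 3 = 1 then Dn n - 1 else Dn n)"
proof -
  have g: "degree (gp n) \<le> Dn n" "coeff (gp n) (Dn n) = cc n" "coeff (pCons 0 (gp n)) (Dn n) = dd n"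
    using gp_coeffs[of n] by auto
  have nz: "gp n \<noteq> 0" using gp_pos[of n] by auto
  show ?thesis
  proof (cases "n mod 3 = 1")
    case False
    then have "coeff (gp n) (Dn n) \<noteq> 0" using g cc_zero by simp
    then have "Dn n \<le> degree (gp n)" by (rule le_degree)
    then show ?thesis using g False by simp
  next
    case True
    have D: "Dn n = Suc (Dn n - 1)" using assms by (simp add: Dn_def)
    have "coeff (gp n) (Dn n - 1) \<noteq> 0" using g(3) dd_nz[OF True] D
      by (metis coeff_pCons_Suc)
    then have a: "Dn n - 1 \<le> degree (gp n)" by (rule le_degree)
    have "degree (gp n) \<noteq> Dn n"
    proof
      assume "degree (gp n) = Dn n"
      then have "lead_coeff (gp n) = 0" using g(2) True cc_zero by simp
      then show False using nz by simp
    qed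
    then show ?thesis using a g(1) True by simp
  qed
qed

lemma HC_rec: "(1 - fps_X) * hilbert_series (m + 3) (cycle_edges (m + 3)) = (1 - fps_X) * HP (m + 2) + fps_X * HP m"
  unfolding hilbert_series_def by (rule fps_rec) (simp add: hf_cyc_rec)

lemma HC_poly: "hilbert_series (m + 3) (cycle_edges (m + 3)) * (1 - fps_X) ^ Suc (Dn m) =
   fps_of_poly (gp (m + 2) + pCons 0 (gp m))"
proof -
  have D: "Dn (m + 2) = Suc (Dn m)" by (simp add: Dn_def)
  have "hilbert_series (m + 3) (cycle_edges (m + 3)) * (1 - fps_X) ^ Suc (Dn m) =
     ((1 - fps_X) * hilbert_series (m + 3) (cycle_edges (m + 3))) * (1 - fps_X) ^ Dn m"
    by (simp add: algebra_simps)
  also have "\<dots> = HP (m + 2) * (1 - fps_X) ^ Dn (m + 2) + fps_X * (HP m * (1 - fps_X) ^ Dn m)"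
    unfolding HC_rec D by (simp add: algebra_simps)
  also have "\<dots> = fps_of_poly (gp (m + 2) + pCons 0 (gp m))"
    unfolding HP_gp by (simp add: fps_of_poly_add fps_of_poly_pCons mult.commute)
  finally show ?thesis .
qed

lemma cyc_deg: "degree (h_polynomial (m + 3) (cycle_edges (m + 3))) = (m + 3) div 2"
proof -
  let ?c = "gp (m + 2) + pCons 0 (gp m)"
  have "poly ?c 1 > 0" using gp_pos[of "m+2"] gp_pos[of m] by simp
  then have h: "h_polynomial (m + 3) (cycle_edges (m + 3)) = ?c"
    using h_unique HC_poly by (metis less_irrefl)
  have D: "Dn (m + 2) = Suc (Dn m)" "(m + 3) div 2 = Suc (Dn m)" by (simp_all add: Dn_def)
  have g1: "degree (gp (m + 2)) \<le> Suc (Dn m)" "coeff (gp (m + 2)) (Suc (Dn m)) = cc (m + 2)"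
    using gp_coeffs[of "m+2"] D by auto
  have g2: "degree (gp m) \<le> Dn m" "coeff (gp m) (Dn m) = cc m"
    using gp_coeffs[of m] by auto
  have "degree ?c \<le> Suc (Dn m)"
    using g1 g2 degree_pCons0_le[of "gp m"] by (intro degree_add_le) auto
  moreover have "coeff ?c (Suc (Dn m)) \<noteq> 0"
    using g1 g2 cyc_nz[of m] by simp
  then have "Suc (Dn m) \<le> degree ?c" by (rule le_degree)
  ultimately show ?thesis using h D by simp
qed

theorem theorem4p5:
  shows "(\<forall>n::nat. 3 \<le> n \<longrightarrow> degree (h_polynomial n (cycle_edges n)) = n div 2)
       \<and> (\<forall>n::nat. 1 \<le> n \<longrightarrow>
            degree (h_polynomial n (path_edges n)) =
              (if n mod 3 = 1 then nat \<lceil>real n / 2\<rceil> - 1 else nat \<lceil>real n / 2\<rceil>))"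
proof safe
  fix n :: nat assume "3 \<le> n"
  then obtain m where "n = m + 3" by (metis add.commute le_Suc_ex)
  then show "degree (h_polynomial n (cycle_edges n)) = n div 2" using cyc_deg by simp
next
  fix n :: nat assume n: "1 \<le> n"
  have "h_polynomial n (path_edges n) = gp n"
    using h_unique[OF _ HP_gp[of n]] gp_pos[of n] by simp
  then show "degree (h_polynomial n (path_edges n)) =
              (if n mod 3 = 1 then nat \<lceil>real n / 2\<rceil> - 1 else nat \<lceil>real n / 2\<rceil>)"
    using path_deg[OF n] by (simp add: ceil_half Dn_def)
qed

end
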